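(* Let $G$ be a multigraph in the class $\mathfrak{SP}'$. Then the reliability polynomial $R_G(q)$ is Schur quasi-stable, i.e. every $q\in\mathbb{C}$ with $R_G(q)=0$ satisfies $|q|\le 1$.
   Context: Multigraphs are finite and may have loops and multiple edges. For a multigraph $G$ and $0\le q\le 1$, let $\mathcal{G}(q)$ be the random spanning subgraph of $G$ obtained by deleting each edge independently with probability $q$; the reliability function $R_G(q)$ is the probability that $\mathcal{G}(q)$ is connected. It is a polynomial in $q$, and it is regarded as a polynomial over $\mathbb{C}$. The class $\mathfrak{SP}$ of series-parallel networks is defined recursively. Each member has a distinguished unordered pair $\{s,t\}$ of distinct vertices, its terminals. A single edge joining its two terminals is in $\mathfrak{SP}$. If $G,G'\in\mathfrak{SP}$ have terminals $\{s,t\}$ and $\{s',t'\}$, no common edges, and only the vertex $t=s'$ in common, then $G\cup G'$ is in $\mathfrak{SP}$ (series connection) with terminals $\{s,t'\}$. If $G,G'\in\mathfrak{SP}$ have no common edges and only the vertices $s=s'$ and $t=t'$ in common, then $G\cup G'$ is in $\mathfrak{SP}$ (parallel connection) with terminals $\{s,t\}$. The class $\mathfrak{SP}'$ consists of the connected multigraphs every two-connected component of which is in $\mathfrak{SP}$ for some choice of terminals. *)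

theory Defs
  imports "HOL-Computational_Algebra.Polynomial" Complex_Main
begin

text \<open>A multigraph is given by a vertex set V, an edge set E (edges are abstract
  objects, so parallel edges are allowed) and an incidence map inc assigning to every
  edge the set of its end vertices (a one-element set for a loop).\<close>

definition multigraph :: "'v set \<Rightarrow> 'e set \<Rightarrow> ('e \<Rightarrow> 'v set) \<Rightarrow> bool" where
  "multigraph V E inc \<longleftrightarrow> finite V \<and> finite E \<and>
     (\<forall>e\<in>E. inc e \<subseteq> V \<and> (card (inc e) = 1 \<or> card (inc e) = 2))"

definition mg_connected :: "'v set \<Rightarrow> 'e set \<Rightarrow> ('e \<Rightarrow> 'v set) \<Rightarrow> bool" where
  "mg_connected V A inc \<longleftrightarrow> V \<noteq> {} \<and>
     (\<forall>u\<in>V. \<forall>v\<in>V. (\<lambda>x y. \<exists>e\<in>A. inc e = {x, y})\<^sup>*\<^sup>* u v)"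

text \<open>Reliability polynomial: probability that the random spanning subgraph,
  where each edge is deleted independently with probability q, is connected.\<close>
definition reliability :: "'v set \<Rightarrow> 'e set \<Rightarrow> ('e \<Rightarrow> 'v set) \<Rightarrow> complex poly" where
  "reliability V E inc =
     (\<Sum>A\<in>{A. A \<subseteq> E \<and> mg_connected V A inc}.
        [:1, -1:] ^ card A * [:0, 1:] ^ (card E - card A))"

text \<open>Series-parallel networks with (ordered representation of the unordered)
  terminal pair s, t.\<close>
inductive sp :: "'v set \<Rightarrow> 'e set \<Rightarrow> ('e \<Rightarrow> 'v set) \<Rightarrow> 'v \<Rightarrow> 'v \<Rightarrow> bool" where
  edge: "s \<noteq> t \<Longrightarrow> inc e = {s, t} \<Longrightarrow> sp {s, t} {e} inc s t"
| swap: "sp V E inc s t \<Longrightarrow> sp V E inc t s"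
| series: "sp V E inc s t \<Longrightarrow> sp V' E' inc' t t' \<Longrightarrow> E \<inter> E' = {} \<Longrightarrow> V \<inter> V' = {t} \<Longrightarrow>
     (\<forall>e\<in>E. inc'' e = inc e) \<Longrightarrow> (\<forall>e\<in>E'. inc'' e = inc' e) \<Longrightarrow>
     sp (V \<union> V') (E \<union> E') inc'' s t'"
| parallel: "sp V E inc s t \<Longrightarrow> sp V' E' inc' s t \<Longrightarrow> E \<inter> E' = {} \<Longrightarrow> V \<inter> V' = {s, t} \<Longrightarrow>
     (\<forall>e\<in>E. inc'' e = inc e) \<Longrightarrow> (\<forall>e\<in>E'. inc'' e = inc' e) \<Longrightarrow>
     sp (V \<union> V') (E \<union> E') inc'' s t"

definition verts :: "('e \<Rightarrow> 'v set) \<Rightarrow> 'e set \<Rightarrow> 'v set" where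
  "verts inc F = (\<Union>e\<in>F. inc e)"

definition nonseparable :: "('e \<Rightarrow> 'v set) \<Rightarrow> 'e set \<Rightarrow> bool" where
  "nonseparable inc F \<longleftrightarrow> F \<noteq> {} \<and> mg_connected (verts inc F) F inc \<and>
     \<not> (\<exists>F1 F2. F1 \<union> F2 = F \<and> F1 \<inter> F2 = {} \<and> F1 \<noteq> {} \<and> F2 \<noteq> {} \<and>
            card (verts inc F1 \<inter> verts inc F2) \<le> 1)"

definition is_block :: "'e set \<Rightarrow> ('e \<Rightarrow> 'v set) \<Rightarrow> 'e set \<Rightarrow> bool" where
  "is_block E inc F \<longleftrightarrow> F \<subseteq> E \<and> nonseparable inc F \<and>
     (\<forall>F'. F \<subseteq> F' \<and> F' \<subseteq> E \<and> nonseparable inc F' \<longrightarrow> F' = F)"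

definition SP' :: "'v set \<Rightarrow> 'e set \<Rightarrow> ('e \<Rightarrow> 'v set) \<Rightarrow> bool" where
  "SP' V E inc \<longleftrightarrow> multigraph V E inc \<and> mg_connected V E inc \<and>
     (\<forall>F. is_block E inc F \<longrightarrow> (\<exists>s t. sp (verts inc F) F inc s t))"

end

theory Submission
  imports Defs
begin


definition reach :: "('e \<Rightarrow> 'v set) \<Rightarrow> 'e set \<Rightarrow> 'v \<Rightarrow> 'v \<Rightarrow> bool" where
  "reach inc A = (\<lambda>x y. \<exists>e\<in>A. inc e = {x, y})\<^sup>*\<^sup>*"

definition conn :: "('e \<Rightarrow> 'v set) \<Rightarrow> 'v set \<Rightarrow> 'e set \<Rightarrow> bool" where
  "conn inc V A \<longleftrightarrow> (\<forall>u\<in>V. \<forall>v\<in>V. reach inc A u v)"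

definition two :: "('e \<Rightarrow> 'v set) \<Rightarrow> 'v set \<Rightarrow> 'e set \<Rightarrow> 'v \<Rightarrow> 'v \<Rightarrow> bool" where
  "two inc V A s t \<longleftrightarrow> \<not> reach inc A s t \<and> (\<forall>v\<in>V. reach inc A s v \<or> reach inc A t v)"

lemma reach_refl[simp]: "reach inc A x x"
  by (simp add: reach_def)

lemma reach_step: "e \<in> A \<Longrightarrow> inc e = {x, y} \<Longrightarrow> reach inc A x y"
  unfolding reach_def by (rule r_into_rtranclp) blast

lemma reach_trans: "reach inc A x y \<Longrightarrow> reach inc A y z \<Longrightarrow> reach inc A x z"
  unfolding reach_def by (rule rtranclp_trans)

lemma reach_sym: "reach inc A x y \<Longrightarrow> reach inc A y x"
  unfolding reach_def
proof (induction rule: rtranclp_induct)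
  case (step y z)
  then obtain e where e: "e \<in> A" "inc e = {y, z}" by blast
  then have "inc e = {z, y}" by (simp add: insert_commute)
  with e(1) have "(\<lambda>x y. \<exists>e\<in>A. inc e = {x, y}) z y" by blast
  then show ?case using step.IH by (rule converse_rtranclp_into_rtranclp)
qed simp

lemma reach_mono: assumes "A \<subseteq> B" shows "reach inc A x y \<Longrightarrow> reach inc B x y"
  unfolding reach_def
proof (induction rule: rtranclp_induct)
  case (step y z)
  then obtain e where e: "e \<in> A" "inc e = {y, z}" by blast
  with assms have "(\<lambda>x y. \<exists>e\<in>B. inc e = {x, y}) y z" by blast
  with step.IH show ?case by (rule rtranclp.rtrancl_into_rtrancl)
qed simp

lemma reach_Un1: "reach inc A1 x y \<Longrightarrow> reach inc (A1 \<union> A2) x y"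
  by (rule reach_mono[OF Un_upper1])

lemma reach_Un2: "reach inc A2 x y \<Longrightarrow> reach inc (A1 \<union> A2) x y"
  by (rule reach_mono[OF Un_upper2])

lemma reach_cong: "(\<forall>e\<in>A. inc e = inc' e) \<Longrightarrow> reach inc A = reach inc' A"
proof -
  assume a: "\<forall>e\<in>A. inc e = inc' e"
  have "(\<lambda>x y. \<exists>e\<in>A. inc e = {x, y}) = (\<lambda>x y. \<exists>e\<in>A. inc' e = {x, y})"
    using a by (intro ext) auto
  then show ?thesis unfolding reach_def by simp
qed

lemma reach_closed:
  assumes "reach inc A u v" "u \<in> V" "\<forall>e\<in>A. inc e \<subseteq> V"
  shows "v \<in> V"
  using assms(1) unfolding reach_def
proof (induction rule: rtranclp_induct)
  case base then show ?case using assms(2) by simp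
next
  case (step y z)
  then obtain e where e: "e \<in> A" "inc e = {y, z}" by blast
  then have "z \<in> inc e" by simp
  then show ?case using assms(3) e(1) by blast
qed

lemma conn_hub: "(\<And>u. u \<in> V \<Longrightarrow> reach inc A u x) \<Longrightarrow> conn inc V A"
  unfolding conn_def by (meson reach_sym reach_trans)

lemma reach_or_hub: "reach inc A u s \<or> reach inc A u t \<Longrightarrow> reach inc A s t \<Longrightarrow> reach inc A u s"
  by (meson reach_sym reach_trans)

lemma reach_or_sym: "reach inc A u s \<or> reach inc A u t \<Longrightarrow> reach inc A s u \<or> reach inc A t u"
  using reach_sym by metis

lemma reach_Q:
  assumes "reach inc (A1 \<union> A2) u v" "u \<in> V1"
    "\<forall>e\<in>A1. inc e \<subseteq> V1" "\<forall>e\<in>A2. inc e \<subseteq> V2"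
  shows "reach inc A1 u v \<or> (\<exists>z\<in>V1 \<inter> V2. reach inc A1 u z)"
  using assms(1) unfolding reach_def[of inc "A1 \<union> A2"]
proof (induction rule: rtranclp_induct)
  case base then show ?case by simp
next
  case (step y w)
  then obtain e where e: "e \<in> A1 \<union> A2" "inc e = {y, w}" by blast
  from step.IH show ?case
  proof (elim disjE)
    assume r: "reach inc A1 u y"
    have yV: "y \<in> V1" using reach_closed[OF r assms(2,3)] .
    show ?case
    proof (cases "e \<in> A1")
      case True
      then have "reach inc A1 y w" using reach_step[of e A1 inc y w] e by simp
      then show ?thesis using r reach_trans[of inc A1 u y w] by simp
    next
      case False then have "e \<in> A2" using e by simp
      then have "y \<in> V2" using assms(4) e by auto
      then show ?thesis using yV r by blast
    qed
  next
    assume "\<exists>z\<in>V1 \<inter> V2. reach inc A1 u z" then show ?case by simp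
  qed
qed

lemma reach_PST:
  assumes "reach inc (A1 \<union> A2) s t" "s \<in> V1" "s \<in> V2" "V1 \<inter> V2 \<subseteq> {s, t}"
    "\<forall>e\<in>A1. inc e \<subseteq> V1" "\<forall>e\<in>A2. inc e \<subseteq> V2"
  shows "reach inc A1 s t \<or> reach inc A2 s t"
proof -
  have "reach inc A1 s t \<or> reach inc A2 s t \<or> reach inc A1 s y \<or> reach inc A2 s y"
    if "reach inc (A1 \<union> A2) s y" for y
    using that unfolding reach_def[of inc "A1 \<union> A2"]
  proof (induction rule: rtranclp_induct)
    case base then show ?case by simp
  next
    case (step y w)
    then obtain e where e: "e \<in> A1 \<union> A2" "inc e = {y, w}" by blast
    have c1: "y \<in> V1" if "reach inc A1 s y" using reach_closed[OF that assms(2,5)] .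
    have c2: "y \<in> V2" if "reach inc A2 s y" using reach_closed[OF that assms(3,6)] .
    show ?case
    proof (cases "e \<in> A1")
      case True
      then have yv: "y \<in> V1" using assms(5) e by auto
      have st: "reach inc A1 y w" using reach_step[of e A1 inc y w] e True by simp
      from step.IH show ?thesis
      proof (elim disjE)
        assume "reach inc A1 s y" then show ?thesis using st reach_trans[of inc A1 s y w] by simp
      next
        assume r: "reach inc A2 s y"
        then have "y \<in> {s, t}" using c2 yv assms(4) by blast
        then show ?thesis using r st by auto
      qed simp_all
    next
      case False
      then have T: "e \<in> A2" using e by simp
      then have yv: "y \<in> V2" using assms(6) e by auto
      have st: "reach inc A2 y w" using reach_step[of e A2 inc y w] e T by simp
      from step.IH show ?thesis
      proof (elim disjE)
        assume "reach inc A2 s y" then show ?thesis using st reach_trans[of inc A2 s y w] by simp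
      next
        assume r: "reach inc A1 s y"
        then have "y \<in> {s, t}" using c1 yv assms(4) by blast
        then show ?thesis using r st by auto
      qed simp_all
    qed
  qed
  from this[OF assms(1)] show ?thesis by blast
qed



lemma series_conn:
  assumes "\<forall>e\<in>A1. inc e \<subseteq> V1" "\<forall>e\<in>A2. inc e \<subseteq> V2" "V1 \<inter> V2 = {x}"
  shows "conn inc (V1 \<union> V2) (A1 \<union> A2) \<longleftrightarrow> conn inc V1 A1 \<and> conn inc V2 A2"
proof
  assume c: "conn inc (V1 \<union> V2) (A1 \<union> A2)"
  have x1: "x \<in> V1" and x2: "x \<in> V2" using assms(3) by auto
  have h1: "reach inc A1 u x" if "u \<in> V1" for u
  proof -
    have "reach inc (A1 \<union> A2) u x" using c that x1 unfolding conn_def by blast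
    from reach_Q[OF this that assms(1,2)] show ?thesis using assms(3) by auto
  qed
  have h2: "reach inc A2 u x" if "u \<in> V2" for u
  proof -
    have "reach inc (A2 \<union> A1) u x" using c that x1 unfolding conn_def by (simp add: Un_commute)
    from reach_Q[OF this that assms(2,1)] show ?thesis using assms(3) by auto
  qed
  have "conn inc V1 A1" unfolding conn_def
  proof (intro ballI)
    fix u v assume "u \<in> V1" "v \<in> V1"
    then show "reach inc A1 u v" using h1 reach_sym reach_trans by metis
  qed
  moreover have "conn inc V2 A2" unfolding conn_def
  proof (intro ballI)
    fix u v assume "u \<in> V2" "v \<in> V2"
    then show "reach inc A2 u v" using h2 reach_sym reach_trans by metis
  qed
  ultimately show "conn inc V1 A1 \<and> conn inc V2 A2" ..
next
  assume c: "conn inc V1 A1 \<and> conn inc V2 A2"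
  have x1: "x \<in> V1" and x2: "x \<in> V2" using assms(3) by auto
  have h: "reach inc (A1 \<union> A2) u x" if "u \<in> V1 \<union> V2" for u
  proof (cases "u \<in> V1")
    case True
    then have "reach inc A1 u x" using c x1 unfolding conn_def by blast
    then show ?thesis by (rule reach_Un1)
  next
    case False
    then have "reach inc A2 u x" using c x2 that unfolding conn_def by blast
    then show ?thesis by (rule reach_Un2)
  qed
  show "conn inc (V1 \<union> V2) (A1 \<union> A2)" unfolding conn_def
  proof (intro ballI)
    fix u v assume "u \<in> V1 \<union> V2" "v \<in> V1 \<union> V2"
    then show "reach inc (A1 \<union> A2) u v" using h reach_sym reach_trans by metis
  qed
qed

lemma series_two:
  assumes H1: "\<forall>e\<in>A1. inc e \<subseteq> V1" and H2: "\<forall>e\<in>A2. inc e \<subseteq> V2" and X: "V1 \<inter> V2 = {t}"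
    and sV: "s \<in> V1" and tV: "t' \<in> V2"
  shows "two inc (V1 \<union> V2) (A1 \<union> A2) s t' \<longleftrightarrow>
    (conn inc V1 A1 \<and> two inc V2 A2 t t') \<or> (two inc V1 A1 s t \<and> conn inc V2 A2)"
proof -
  let ?r = "reach inc (A1 \<union> A2)" and ?r1 = "reach inc A1" and ?r2 = "reach inc A2"
  have t1: "t \<in> V1" and t2: "t \<in> V2" using X by auto
  have Q1: "?r1 u v \<or> ?r1 u t" if "u \<in> V1" "?r u v" for u v
    using reach_Q[OF that(2,1) H1 H2] X by auto
  have Q2: "?r2 u v \<or> ?r2 u t" if "u \<in> V2" "?r u v" for u v
  proof -
    have "reach inc (A2 \<union> A1) u v" using that(2) by (simp add: Un_commute)
    from reach_Q[OF this that(1) H2 H1] X show ?thesis by auto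
  qed
  have C1: "v \<in> V1" if "?r1 u v" "u \<in> V1" for u v using reach_closed[OF that H1] .
  have C2: "v \<in> V2" if "?r2 u v" "u \<in> V2" for u v using reach_closed[OF that H2] .
  have M1: "?r u v" if "?r1 u v" for u v using reach_Un1[OF that] .
  have M2: "?r u v" if "?r2 u v" for u v using reach_Un2[OF that] .
  note S = reach_sym[of inc "A1 \<union> A2"] reach_sym[of inc A1] reach_sym[of inc A2]
  note T = reach_trans[of inc "A1 \<union> A2"] reach_trans[of inc A1] reach_trans[of inc A2]
  show ?thesis
  proof
    assume a: "two inc (V1 \<union> V2) (A1 \<union> A2) s t'"
    then have nst': "\<not> ?r s t'" and all: "\<And>v. v \<in> V1 \<union> V2 \<Longrightarrow> ?r s v \<or> ?r t' v"
      unfolding two_def by auto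
    have all': "?r v s \<or> ?r v t'" if "v \<in> V1 \<union> V2" for v using all[OF that] S by blast
    show "(conn inc V1 A1 \<and> two inc V2 A2 t t') \<or> (two inc V1 A1 s t \<and> conn inc V2 A2)"
    proof (cases "?r s t")
      case True
      then have st: "?r1 s t" using Q1[OF sV] by blast
      have u1: "?r1 u t" if "u \<in> V1" for u
      proof -
        from all'[of u] that have "?r u s \<or> ?r u t'" by blast
        then show ?thesis
        proof
          assume "?r u s" then show ?thesis using Q1[OF that] st T by blast
        next
          assume "?r u t'"
          then have "?r1 u t' \<or> ?r1 u t" using Q1[OF that] by blast
          then show ?thesis
          proof
            assume "?r1 u t'" then have "t' \<in> V1" using C1 that by blast
            then have "t' = t" using X tV by blast
            then show ?thesis using \<open>?r1 u t'\<close> by simp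
          qed
        qed
      qed
      have c1: "conn inc V1 A1" unfolding conn_def using u1 S T by metis
      have n2: "\<not> ?r2 t t'"
      proof
        assume "?r2 t t'" then have "?r t t'" by (rule M2)
        then have "?r s t'" using True T by blast
        then show False using nst' by simp
      qed
      have v2: "?r2 t v \<or> ?r2 t' v" if "v \<in> V2" for v
      proof -
        from all'[of v] that have "?r v s \<or> ?r v t'" by blast
        then have "?r2 v t \<or> ?r2 v t'"
        proof
          assume "?r v s"
          then have "?r2 v s \<or> ?r2 v t" using Q2[OF that] by blast
          then show ?thesis
          proof
            assume "?r2 v s" then have "s \<in> V2" using C2 that by blast
            then have "s = t" using X sV by blast
            then show ?thesis using \<open>?r2 v s\<close> by simp
          qed simp
        next
          assume "?r v t'" then show ?thesis using Q2[OF that] by blast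
        qed
        then show ?thesis using S by blast
      qed
      have "two inc V2 A2 t t'" unfolding two_def using n2 v2 by blast
      with c1 show ?thesis by blast
    next
      case False
      then have n1: "\<not> ?r1 s t" using M1 by blast
      have u1: "?r1 s u \<or> ?r1 t u" if "u \<in> V1" for u
      proof -
        from all'[of u] that have "?r u s \<or> ?r u t'" by blast
        then have "?r1 u s \<or> ?r1 u t"
        proof
          assume "?r u s" then show ?thesis using Q1[OF that] by blast
        next
          assume "?r u t'"
          then have "?r1 u t' \<or> ?r1 u t" using Q1[OF that] by blast
          then show ?thesis
          proof
            assume "?r1 u t'" then have "t' \<in> V1" using C1 that by blast
            then have "t' = t" using X tV by blast
            then show ?thesis using \<open>?r1 u t'\<close> by simp
          qed simp
        qed
        then show ?thesis using S by blast
      qed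
      have "?r t' t" using all'[of t] t1 False S by blast
      then have tt: "?r2 t' t" using Q2[OF tV] by blast
      have v2: "?r2 v t" if "v \<in> V2" for v
      proof -
        from all'[of v] that have "?r v s \<or> ?r v t'" by blast
        then show ?thesis
        proof
          assume "?r v s"
          then have "?r2 v s \<or> ?r2 v t" using Q2[OF that] by blast
          then show ?thesis
          proof
            assume "?r2 v s" then have "s \<in> V2" using C2 that by blast
            then have "s = t" using X sV by blast
            then show ?thesis using \<open>?r2 v s\<close> by simp
          qed simp
        next
          assume "?r v t'"
          then have "?r2 v t' \<or> ?r2 v t" using Q2[OF that] by blast
          then show ?thesis using tt T by blast
        qed
      qed
      have c2: "conn inc V2 A2" unfolding conn_def using v2 S T by metis
      have "two inc V1 A1 s t" unfolding two_def using n1 u1 by blast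
      with c2 show ?thesis by blast
    qed
  next
    assume "(conn inc V1 A1 \<and> two inc V2 A2 t t') \<or> (two inc V1 A1 s t \<and> conn inc V2 A2)"
    then show "two inc (V1 \<union> V2) (A1 \<union> A2) s t'"
    proof
      assume a: "conn inc V1 A1 \<and> two inc V2 A2 t t'"
      then have st: "?r1 s t" using sV t1 unfolding conn_def by blast
      have n: "\<not> ?r s t'"
      proof
        assume "?r s t'"
        then have "?r t' t" using M1[OF st] S T by blast
        then have "?r2 t' t" using Q2[OF tV] by blast
        then show False using a S unfolding two_def by blast
      qed
      have "?r s v \<or> ?r t' v" if "v \<in> V1 \<union> V2" for v
      proof (cases "v \<in> V1")
        case True then show ?thesis using a sV M1 unfolding conn_def by blast
      next
        case False then have "v \<in> V2" using that by blast
        then have "?r2 t v \<or> ?r2 t' v" using a unfolding two_def by blast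
        then show ?thesis using M1[OF st] M2 T by blast
      qed
      then show ?thesis unfolding two_def using n by blast
    next
      assume a: "two inc V1 A1 s t \<and> conn inc V2 A2"
      then have tt: "?r2 t' t" using tV t2 unfolding conn_def by blast
      have n: "\<not> ?r s t'"
      proof
        assume "?r s t'"
        then have "?r s t" using M2[OF tt] T by blast
        then have "?r1 s t" using Q1[OF sV] by blast
        then show False using a unfolding two_def by blast
      qed
      have "?r s v \<or> ?r t' v" if "v \<in> V1 \<union> V2" for v
      proof (cases "v \<in> V1")
        case True
        then have "?r1 s v \<or> ?r1 t v" using a unfolding two_def by blast
        then show ?thesis using M2[OF tt] M1 T by blast
      next
        case False then have "v \<in> V2" using that by blast
        then show ?thesis using a tV M2 unfolding conn_def by blast
      qed
      then show ?thesis unfolding two_def using n by blast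
    qed
  qed
qed


lemma parallel_aux:
  assumes H1: "\<forall>e\<in>A1. inc e \<subseteq> V1" and H2: "\<forall>e\<in>A2. inc e \<subseteq> V2" and X: "V1 \<inter> V2 = {s, t}"
  shows "u \<in> V1 \<Longrightarrow> reach inc (A1 \<union> A2) u v \<Longrightarrow> reach inc A1 u s \<or> reach inc A1 u t \<or> reach inc A1 u v"
    and "u \<in> V2 \<Longrightarrow> reach inc (A1 \<union> A2) u v \<Longrightarrow> reach inc A2 u s \<or> reach inc A2 u t \<or> reach inc A2 u v"
    and "reach inc (A1 \<union> A2) s t \<Longrightarrow> reach inc A1 s t \<or> reach inc A2 s t"
proof -
  show "reach inc A1 u s \<or> reach inc A1 u t \<or> reach inc A1 u v" if "u \<in> V1" "reach inc (A1 \<union> A2) u v"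
    using reach_Q[OF that(2,1) H1 H2] X by auto
  show "reach inc A2 u s \<or> reach inc A2 u t \<or> reach inc A2 u v" if "u \<in> V2" "reach inc (A1 \<union> A2) u v"
  proof -
    have "reach inc (A2 \<union> A1) u v" using that(2) by (simp add: Un_commute)
    from reach_Q[OF this that(1) H2 H1] X show ?thesis by auto
  qed
  show "reach inc A1 s t \<or> reach inc A2 s t" if "reach inc (A1 \<union> A2) s t"
    using reach_PST[OF that _ _ _ H1 H2] X by auto
qed


lemma parallel_conn:
  assumes H1: "\<forall>e\<in>A1. inc e \<subseteq> V1" and H2: "\<forall>e\<in>A2. inc e \<subseteq> V2" and X: "V1 \<inter> V2 = {s, t}"
  shows "conn inc (V1 \<union> V2) (A1 \<union> A2) \<longleftrightarrow>
    (conn inc V1 A1 \<and> conn inc V2 A2) \<or> (conn inc V1 A1 \<and> two inc V2 A2 s t) \<or>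
    (two inc V1 A1 s t \<and> conn inc V2 A2)"
proof -
  let ?r = "reach inc (A1 \<union> A2)" and ?r1 = "reach inc A1" and ?r2 = "reach inc A2"
  note P = parallel_aux[OF H1 H2 X]
  have s1: "s \<in> V1" and s2: "s \<in> V2" and t1: "t \<in> V1" and t2: "t \<in> V2" using X by auto
  have M1: "?r u v" if "?r1 u v" for u v using reach_Un1[OF that] .
  have M2: "?r u v" if "?r2 u v" for u v using reach_Un2[OF that] .
  note S = reach_sym[of inc "A1 \<union> A2"] reach_sym[of inc A1] reach_sym[of inc A2]
  note T = reach_trans[of inc "A1 \<union> A2"] reach_trans[of inc A1] reach_trans[of inc A2]
  show ?thesis
  proof
    assume c: "conn inc (V1 \<union> V2) (A1 \<union> A2)"
    have g1: "?r1 u s \<or> ?r1 u t" if "u \<in> V1" for u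
    proof -
      have "?r u s" using c that s1 unfolding conn_def by blast
      then show ?thesis using P(1)[OF that] by blast
    qed
    have g2: "?r2 u s \<or> ?r2 u t" if "u \<in> V2" for u
    proof -
      have "?r u s" using c that s1 unfolding conn_def by blast
      then show ?thesis using P(2)[OF that] by blast
    qed
    have rst: "?r s t" using c s1 t1 unfolding conn_def by blast
    show "(conn inc V1 A1 \<and> conn inc V2 A2) \<or> (conn inc V1 A1 \<and> two inc V2 A2 s t) \<or>
      (two inc V1 A1 s t \<and> conn inc V2 A2)"
    proof (cases "?r1 s t")
      case True
      have "?r1 u s" if "u \<in> V1" for u using reach_or_hub[OF g1[OF that] True] .
      then have c1: "conn inc V1 A1" by (rule conn_hub)
      show ?thesis
      proof (cases "?r2 s t")
        case True
        have "?r2 u s" if "u \<in> V2" for u using reach_or_hub[OF g2[OF that] True] .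
        then have "conn inc V2 A2" by (rule conn_hub)
        with c1 show ?thesis by blast
      next
        case False
        then have "two inc V2 A2 s t" unfolding two_def using reach_or_sym[OF g2] by blast
        with c1 show ?thesis by blast
      qed
    next
      case False
      then have tw: "two inc V1 A1 s t" unfolding two_def using reach_or_sym[OF g1] by blast
      have st2: "?r2 s t" using P(3)[OF rst] False by blast
      have "?r2 u s" if "u \<in> V2" for u using reach_or_hub[OF g2[OF that] st2] .
      then have "conn inc V2 A2" by (rule conn_hub)
      with tw show ?thesis by blast
    qed
  next
    assume a: "(conn inc V1 A1 \<and> conn inc V2 A2) \<or> (conn inc V1 A1 \<and> two inc V2 A2 s t) \<or>
      (two inc V1 A1 s t \<and> conn inc V2 A2)"
    have st: "?r s t"
    proof (cases "conn inc V1 A1")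
      case True then show ?thesis using s1 t1 M1 unfolding conn_def by blast
    next
      case False then have "conn inc V2 A2" using a by blast
      then show ?thesis using s2 t2 M2 unfolding conn_def by blast
    qed
    have b1: "conn inc V1 A1 \<or> two inc V1 A1 s t" and b2: "conn inc V2 A2 \<or> two inc V2 A2 s t"
      using a by blast+
    have f1: "?r1 u s \<or> ?r1 u t" if "u \<in> V1" for u
      using b1
    proof
      assume "conn inc V1 A1" then show ?thesis using that s1 unfolding conn_def by blast
    next
      assume "two inc V1 A1 s t" then have "?r1 s u \<or> ?r1 t u" using that unfolding two_def by blast
      then show ?thesis using reach_sym[of inc A1 s u] reach_sym[of inc A1 t u] by blast
    qed
    have f2: "?r2 u s \<or> ?r2 u t" if "u \<in> V2" for u
      using b2
    proof
      assume "conn inc V2 A2" then show ?thesis using that s2 unfolding conn_def by blast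
    next
      assume "two inc V2 A2 s t" then have "?r2 s u \<or> ?r2 t u" using that unfolding two_def by blast
      then show ?thesis using reach_sym[of inc A2 s u] reach_sym[of inc A2 t u] by blast
    qed
    have "?r u s" if "u \<in> V1 \<union> V2" for u
    proof -
      have "?r u s \<or> ?r u t"
      proof (cases "u \<in> V1")
        case True then show ?thesis using f1[OF True] M1 by blast
      next
        case False then have "u \<in> V2" using that by blast
        then show ?thesis using f2 M2 by blast
      qed
      then show ?thesis by (rule reach_or_hub[OF _ st])
    qed
    then show "conn inc (V1 \<union> V2) (A1 \<union> A2)" by (rule conn_hub)
  qed
qed


lemma parallel_two:
  assumes H1: "\<forall>e\<in>A1. inc e \<subseteq> V1" and H2: "\<forall>e\<in>A2. inc e \<subseteq> V2" and X: "V1 \<inter> V2 = {s, t}"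
  shows "two inc (V1 \<union> V2) (A1 \<union> A2) s t \<longleftrightarrow> two inc V1 A1 s t \<and> two inc V2 A2 s t"
proof -
  let ?r = "reach inc (A1 \<union> A2)" and ?r1 = "reach inc A1" and ?r2 = "reach inc A2"
  note P = parallel_aux[OF H1 H2 X]
  have M1: "?r u v" if "?r1 u v" for u v using reach_Un1[OF that] .
  have M2: "?r u v" if "?r2 u v" for u v using reach_Un2[OF that] .
  note S = reach_sym[of inc "A1 \<union> A2"] reach_sym[of inc A1] reach_sym[of inc A2]
  show ?thesis
  proof
    assume a: "two inc (V1 \<union> V2) (A1 \<union> A2) s t"
    then have n: "\<not> ?r s t" unfolding two_def by blast
    have g: "?r u s \<or> ?r u t" if "u \<in> V1 \<union> V2" for u using a that S unfolding two_def by blast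
    have "?r1 u s \<or> ?r1 u t" if "u \<in> V1" for u using g[of u] that P(1)[OF that] by blast
    then have "two inc V1 A1 s t" unfolding two_def using n M1 S by blast
    moreover have "?r2 u s \<or> ?r2 u t" if "u \<in> V2" for u using g[of u] that P(2)[OF that] by blast
    then have "two inc V2 A2 s t" unfolding two_def using n M2 S by blast
    ultimately show "two inc V1 A1 s t \<and> two inc V2 A2 s t" ..
  next
    assume a: "two inc V1 A1 s t \<and> two inc V2 A2 s t"
    have n: "\<not> ?r s t" using P(3) a unfolding two_def by blast
    have "?r s v \<or> ?r t v" if "v \<in> V1 \<union> V2" for v using a that M1 M2 unfolding two_def by blast
    then show "two inc (V1 \<union> V2) (A1 \<union> A2) s t" unfolding two_def using n by blast
  qed
qed



definition wt :: "complex \<Rightarrow> 'e set \<Rightarrow> 'e set \<Rightarrow> complex" where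
  "wt q E A = (1 - q) ^ card A * q ^ (card E - card A)"

definition ws :: "complex \<Rightarrow> 'e set \<Rightarrow> ('e set \<Rightarrow> bool) \<Rightarrow> complex" where
  "ws q E P = (\<Sum>A\<in>Pow E. if P A then wt q E A else 0)"

lemma sum_Pow_Un:
  assumes "finite E1" "finite E2" "E1 \<inter> E2 = {}"
  shows "(\<Sum>A\<in>Pow (E1 \<union> E2). g A) = (\<Sum>A1\<in>Pow E1. \<Sum>A2\<in>Pow E2. g (A1 \<union> A2))"
proof -
  have bij: "bij_betw (\<lambda>(A1, A2). A1 \<union> A2) (Pow E1 \<times> Pow E2) (Pow (E1 \<union> E2))"
  proof (rule bij_betwI')
    fix x y assume "x \<in> Pow E1 \<times> Pow E2" "y \<in> Pow E1 \<times> Pow E2"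
    then obtain a1 a2 b1 b2 where x: "x = (a1, a2)" and y: "y = (b1, b2)"
      and s: "a1 \<subseteq> E1" "a2 \<subseteq> E2" "b1 \<subseteq> E1" "b2 \<subseteq> E2" by (cases x, cases y) auto
    have "a1 = (a1 \<union> a2) \<inter> E1" "b1 = (b1 \<union> b2) \<inter> E1"
      "a2 = (a1 \<union> a2) \<inter> E2" "b2 = (b1 \<union> b2) \<inter> E2"
      using s assms(3) by auto
    then show "((case x of (A1, A2) \<Rightarrow> A1 \<union> A2) = (case y of (A1, A2) \<Rightarrow> A1 \<union> A2)) = (x = y)"
      unfolding x y by auto
  next
    fix x assume "x \<in> Pow E1 \<times> Pow E2" then show "(case x of (A1, A2) \<Rightarrow> A1 \<union> A2) \<in> Pow (E1 \<union> E2)"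
      by auto
  next
    fix y assume "y \<in> Pow (E1 \<union> E2)"
    then show "\<exists>x\<in>Pow E1 \<times> Pow E2. y = (case x of (A1, A2) \<Rightarrow> A1 \<union> A2)"
      by (intro bexI[of _ "(y \<inter> E1, y \<inter> E2)"]) auto
  qed
  have "(\<Sum>A\<in>Pow (E1 \<union> E2). g A) = (\<Sum>x\<in>Pow E1 \<times> Pow E2. g ((\<lambda>(A1, A2). A1 \<union> A2) x))"
    using sum.reindex_bij_betw[OF bij, of g] by simp
  also have "\<dots> = (\<Sum>A1\<in>Pow E1. \<Sum>A2\<in>Pow E2. g (A1 \<union> A2))"
    by (simp add: sum.cartesian_product split_def)
  finally show ?thesis .
qed


lemma wt_Un:
  assumes "finite E1" "finite E2" "E1 \<inter> E2 = {}" "A1 \<subseteq> E1" "A2 \<subseteq> E2"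
  shows "wt q (E1 \<union> E2) (A1 \<union> A2) = wt q E1 A1 * wt q E2 A2"
proof -
  have f: "finite A1" "finite A2" using assms(1,2,4,5) finite_subset by blast+
  have c1: "card (A1 \<union> A2) = card A1 + card A2"
    using f assms by (intro card_Un_disjoint) auto
  have c2: "card (E1 \<union> E2) = card E1 + card E2" using assms card_Un_disjoint by blast
  have l1: "card A1 \<le> card E1" "card A2 \<le> card E2" using assms(1,2,4,5) card_mono by blast+
  have "card (E1 \<union> E2) - card (A1 \<union> A2) = (card E1 - card A1) + (card E2 - card A2)"
    using c1 c2 l1 by simp
  then show ?thesis unfolding wt_def c1 by (simp add: power_add algebra_simps)
qed


lemma ws_split1:
  assumes "finite E1" "finite E2" "E1 \<inter> E2 = {}"
    and "\<And>A1 A2. A1 \<subseteq> E1 \<Longrightarrow> A2 \<subseteq> E2 \<Longrightarrow> P (A1 \<union> A2) = (P1 A1 \<and> P2 A2)"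
  shows "ws q (E1 \<union> E2) P = ws q E1 P1 * ws q E2 P2"
proof -
  have "ws q (E1 \<union> E2) P = (\<Sum>A1\<in>Pow E1. \<Sum>A2\<in>Pow E2.
      (if P1 A1 then wt q E1 A1 else 0) * (if P2 A2 then wt q E2 A2 else 0))"
    unfolding ws_def sum_Pow_Un[OF assms(1-3)]
    by (intro sum.cong refl) (auto simp: assms(4) wt_Un[OF assms(1-3)])
  then show ?thesis unfolding ws_def by (simp add: sum_product)
qed


lemma ws_split2:
  assumes "finite E1" "finite E2" "E1 \<inter> E2 = {}"
    and "\<And>A1 A2. A1 \<subseteq> E1 \<Longrightarrow> A2 \<subseteq> E2 \<Longrightarrow> P (A1 \<union> A2) = ((P1 A1 \<and> P2 A2) \<or> (Q1 A1 \<and> Q2 A2))"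
    and "\<And>A1. A1 \<subseteq> E1 \<Longrightarrow> \<not> (P1 A1 \<and> Q1 A1)"
  shows "ws q (E1 \<union> E2) P = ws q E1 P1 * ws q E2 P2 + ws q E1 Q1 * ws q E2 Q2"
proof -
  have "ws q (E1 \<union> E2) P = (\<Sum>A1\<in>Pow E1. \<Sum>A2\<in>Pow E2.
      (if P1 A1 then wt q E1 A1 else 0) * (if P2 A2 then wt q E2 A2 else 0) +
      (if Q1 A1 then wt q E1 A1 else 0) * (if Q2 A2 then wt q E2 A2 else 0))"
    unfolding ws_def sum_Pow_Un[OF assms(1-3)]
  proof (intro sum.cong refl)
    fix A1 A2 assume "A1 \<in> Pow E1" "A2 \<in> Pow E2"
    with assms(4,5)[of A1] assms(4)[of A1 A2] show
      "(if P (A1 \<union> A2) then wt q (E1 \<union> E2) (A1 \<union> A2) else 0) =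
       (if P1 A1 then wt q E1 A1 else 0) * (if P2 A2 then wt q E2 A2 else 0) +
       (if Q1 A1 then wt q E1 A1 else 0) * (if Q2 A2 then wt q E2 A2 else 0)"
      by (auto simp: wt_Un[OF assms(1-3)])
  qed
  then show ?thesis unfolding ws_def by (simp add: sum_product sum.distrib)
qed

lemma ws_split3:
  assumes "finite E1" "finite E2" "E1 \<inter> E2 = {}"
    and "\<And>A1 A2. A1 \<subseteq> E1 \<Longrightarrow> A2 \<subseteq> E2 \<Longrightarrow> P (A1 \<union> A2) =
      ((P1 A1 \<and> P2 A2) \<or> (P1 A1 \<and> Q2 A2) \<or> (Q1 A1 \<and> P2 A2))"
    and "\<And>A1. A1 \<subseteq> E1 \<Longrightarrow> \<not> (P1 A1 \<and> Q1 A1)"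
    and "\<And>A2. A2 \<subseteq> E2 \<Longrightarrow> \<not> (P2 A2 \<and> Q2 A2)"
  shows "ws q (E1 \<union> E2) P = ws q E1 P1 * ws q E2 P2 + ws q E1 P1 * ws q E2 Q2 + ws q E1 Q1 * ws q E2 P2"
proof -
  have "ws q (E1 \<union> E2) P = (\<Sum>A1\<in>Pow E1. \<Sum>A2\<in>Pow E2.
      (if P1 A1 then wt q E1 A1 else 0) * (if P2 A2 then wt q E2 A2 else 0) +
      (if P1 A1 then wt q E1 A1 else 0) * (if Q2 A2 then wt q E2 A2 else 0) +
      (if Q1 A1 then wt q E1 A1 else 0) * (if P2 A2 then wt q E2 A2 else 0))"
    unfolding ws_def sum_Pow_Un[OF assms(1-3)]
  proof (intro sum.cong refl)
    fix A1 A2 assume "A1 \<in> Pow E1" "A2 \<in> Pow E2"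
    with assms(5)[of A1] assms(6)[of A2] assms(4)[of A1 A2] show
      "(if P (A1 \<union> A2) then wt q (E1 \<union> E2) (A1 \<union> A2) else 0) =
       (if P1 A1 then wt q E1 A1 else 0) * (if P2 A2 then wt q E2 A2 else 0) +
       (if P1 A1 then wt q E1 A1 else 0) * (if Q2 A2 then wt q E2 A2 else 0) +
       (if Q1 A1 then wt q E1 A1 else 0) * (if P2 A2 then wt q E2 A2 else 0)"
      by (auto simp: wt_Un[OF assms(1-3)])
  qed
  then show ?thesis unfolding ws_def by (simp add: sum_product sum.distrib)
qed

lemma ws_cong:
  "(\<And>A. A \<subseteq> E \<Longrightarrow> P A = P' A) \<Longrightarrow> ws q E P = ws q E P'"
  unfolding ws_def by (intro sum.cong refl) auto



lemma reach_empty: "reach inc {} x y \<longleftrightarrow> x = y"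
proof
  assume "reach inc {} x y"
  then show "x = y" unfolding reach_def
    by (induction rule: rtranclp_induct) auto
qed simp

lemma conn_cong: "(\<forall>e\<in>A. inc e = inc' e) \<Longrightarrow> conn inc V A = conn inc' V A"
  unfolding conn_def using reach_cong[of A inc inc'] by simp

lemma two_cong: "(\<forall>e\<in>A. inc e = inc' e) \<Longrightarrow> two inc V A s t = two inc' V A s t"
  unfolding two_def using reach_cong[of A inc inc'] by simp

lemma two_swap: "two inc V A t s = two inc V A s t"
  unfolding two_def using reach_sym[of inc A s t] reach_sym[of inc A t s] by blast

lemma conn_two_excl: "s \<in> V \<Longrightarrow> t \<in> V \<Longrightarrow> \<not> (conn inc V A \<and> two inc V A s t)"
  unfolding conn_def two_def by blast

lemma L0: "cmod (1 + b) < cmod b \<longleftrightarrow> Re b < - 1 / 2"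
proof -
  have "cmod (1 + b) < cmod b \<longleftrightarrow> (Re (1 + b))\<^sup>2 + (Im (1 + b))\<^sup>2 < (Re b)\<^sup>2 + (Im b)\<^sup>2"
    unfolding cmod_def by (rule real_sqrt_less_iff)
  also have "\<dots> \<longleftrightarrow> Re b < - 1 / 2" by (simp add: power2_eq_square algebra_simps) linarith
  finally show ?thesis .
qed

lemma L1:
  assumes "R \<noteq> 0"
  shows "cmod (R + S) < cmod S \<longleftrightarrow> Re (S / R) < - 1 / 2"
proof -
  have "R + S = R * (1 + S / R)" "S = R * (S / R)" using assms by (auto simp: field_simps)
  then have "cmod (R + S) = cmod R * cmod (1 + S / R)" "cmod S = cmod R * cmod (S / R)"
    by (metis norm_mult)+
  then have "cmod (R + S) < cmod S \<longleftrightarrow> cmod (1 + S / R) < cmod (S / R)"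
    using assms by simp
  then show ?thesis using L0 by simp
qed

lemma series_ineq:
  assumes "cmod (R1 + S1) < cmod S1" "cmod (R2 + S2) < cmod S2"
  shows "cmod (R1 * R2 + (R1 * S2 + S1 * R2)) < cmod (R1 * S2 + S1 * R2)"
proof -
  have r1: "R1 \<noteq> 0" and r2: "R2 \<noteq> 0" using assms by auto
  have a1: "Re (S1 / R1) < - 1 / 2" and a2: "Re (S2 / R2) < - 1 / 2"
    using L1[OF r1] L1[OF r2] assms by auto
  have "(R1 * S2 + S1 * R2) / (R1 * R2) = S2 / R2 + S1 / R1" using r1 r2 by (simp add: field_simps)
  then have "Re ((R1 * S2 + S1 * R2) / (R1 * R2)) < - 1 / 2" using a1 a2 by simp
  then show ?thesis using L1[of "R1 * R2" "R1 * S2 + S1 * R2"] r1 r2 by simp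
qed

lemma parallel_ineq:
  assumes "cmod (R1 + S1) < cmod S1" "cmod (R2 + S2) < cmod S2"
  shows "cmod (R1 * R2 + R1 * S2 + S1 * R2 + S1 * S2) < cmod (S1 * S2)"
proof -
  have "R1 * R2 + R1 * S2 + S1 * R2 + S1 * S2 = (R1 + S1) * (R2 + S2)" by (simp add: algebra_simps)
  then have "cmod (R1 * R2 + R1 * S2 + S1 * R2 + S1 * S2) = cmod (R1 + S1) * cmod (R2 + S2)"
    by (simp add: norm_mult)
  also have "\<dots> < cmod S1 * cmod S2"
    using assms by (intro mult_strict_mono) auto
  finally show ?thesis by (simp add: norm_mult)
qed



abbreviation RR where "RR q inc V E \<equiv> ws q E (conn inc V)"
abbreviation SS where "SS q inc V E s t \<equiv> ws q E (\<lambda>A. two inc V A s t)"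

lemma ws_single: "ws q {e} P = (if P {} then q else 0) + (if P {e} then 1 - q else 0)"
proof -
  have "Pow {e} = {{}, {e}}" by blast
  then show ?thesis unfolding ws_def by (simp add: wt_def)
qed

lemma sp_inv:
  "sp V E inc s t \<Longrightarrow> finite E \<and> s \<in> V \<and> t \<in> V \<and> (\<forall>e\<in>E. inc e \<subseteq> V) \<and>
    (\<forall>q. 1 < cmod q \<longrightarrow> cmod (RR q inc V E + SS q inc V E s t) < cmod (SS q inc V E s t))"
proof (induction rule: sp.induct)
  case (edge s t inc e)
  have r0: "\<not> reach inc {} s t" using edge by (simp add: reach_empty)
  have r1: "reach inc {e} s t" using edge by (intro reach_step) auto
  have c0: "\<not> conn inc {s, t} {}" using r0 unfolding conn_def by blast
  have c1: "conn inc {s, t} {e}"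
    using r1 reach_sym[OF r1] unfolding conn_def by auto
  have t0: "two inc {s, t} {} s t" using r0 unfolding two_def by auto
  have t1: "\<not> two inc {s, t} {e} s t" using r1 unfolding two_def by auto
  show ?case using edge c0 c1 t0 t1 by (simp add: ws_single)
next
  case (swap V E inc s t)
  then show ?case by (simp add: two_swap)
next
  case (series V E inc s t V' E' inc' t' inc'')
  note I1 = series.IH(1) and I2 = series.IH(2)
  have fin: "finite E" "finite E'" using I1 I2 by blast+
  have sV: "s \<in> V" and tV: "t \<in> V" "t \<in> V'" and t'V: "t' \<in> V'" using I1 I2 by blast+
  have H1: "\<forall>e\<in>E. inc e \<subseteq> V" and H2: "\<forall>e\<in>E'. inc' e \<subseteq> V'" using I1 I2 by blast+
  have H1'': "\<forall>e\<in>E. inc'' e \<subseteq> V" and H2'': "\<forall>e\<in>E'. inc'' e \<subseteq> V'" using H1 H2 series.hyps by auto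
  have ag1: "\<forall>e\<in>A. inc'' e = inc e" if "A \<subseteq> E" for A using that series.hyps by auto
  have ag2: "\<forall>e\<in>A. inc'' e = inc' e" if "A \<subseteq> E'" for A using that series.hyps by auto
  have RS: "RR q inc'' (V \<union> V') (E \<union> E') = RR q inc V E * RR q inc' V' E'" for q
  proof (rule ws_split1[OF fin series.hyps(3)])
    fix A1 A2 assume a: "A1 \<subseteq> E" "A2 \<subseteq> E'"
    have "conn inc'' (V \<union> V') (A1 \<union> A2) = (conn inc'' V A1 \<and> conn inc'' V' A2)"
    proof -
      have p1: "\<forall>e\<in>A1. inc'' e \<subseteq> V" using a(1) H1'' by blast
      have p2: "\<forall>e\<in>A2. inc'' e \<subseteq> V'" using a(2) H2'' by blast
      show ?thesis by (rule series_conn[OF p1 p2 series.hyps(4)])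
    qed
    then show "conn inc'' (V \<union> V') (A1 \<union> A2) = (conn inc V A1 \<and> conn inc' V' A2)"
      using conn_cong[OF ag1[OF a(1)], of V] conn_cong[OF ag2[OF a(2)], of V'] by (simp only:)
  qed
  have SSe: "SS q inc'' (V \<union> V') (E \<union> E') s t' =
      RR q inc V E * SS q inc' V' E' t t' + SS q inc V E s t * RR q inc' V' E'" for q
  proof (rule ws_split2[OF fin series.hyps(3)])
    fix A1 A2 assume a: "A1 \<subseteq> E" "A2 \<subseteq> E'"
    have "two inc'' (V \<union> V') (A1 \<union> A2) s t' = ((conn inc'' V A1 \<and> two inc'' V' A2 t t') \<or>
        (two inc'' V A1 s t \<and> conn inc'' V' A2))"
    proof -
      have p1: "\<forall>e\<in>A1. inc'' e \<subseteq> V" using a(1) H1'' by blast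
      have p2: "\<forall>e\<in>A2. inc'' e \<subseteq> V'" using a(2) H2'' by blast
      show ?thesis by (rule series_two[OF p1 p2 series.hyps(4) sV t'V])
    qed
    then show "two inc'' (V \<union> V') (A1 \<union> A2) s t' = ((conn inc V A1 \<and> two inc' V' A2 t t') \<or>
        (two inc V A1 s t \<and> conn inc' V' A2))"
      using conn_cong[OF ag1[OF a(1)], of V] conn_cong[OF ag2[OF a(2)], of V']
        two_cong[OF ag1[OF a(1)], of V] two_cong[OF ag2[OF a(2)], of V'] by (simp only:)
  next
    fix A1 show "\<not> (conn inc V A1 \<and> two inc V A1 s t)" by (rule conn_two_excl[OF sV tV(1)])
  qed
  have ineq: "cmod (RR q inc'' (V \<union> V') (E \<union> E') + SS q inc'' (V \<union> V') (E \<union> E') s t')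
      < cmod (SS q inc'' (V \<union> V') (E \<union> E') s t')" if "1 < cmod q" for q
  proof -
    have i1: "cmod (RR q inc V E + SS q inc V E s t) < cmod (SS q inc V E s t)" using I1 that by blast
    have i2: "cmod (RR q inc' V' E' + SS q inc' V' E' t t') < cmod (SS q inc' V' E' t t')" using I2 that by blast
    show ?thesis unfolding RS SSe using series_ineq[OF i1 i2] by (simp add: mult.commute)
  qed
  have "\<forall>e\<in>E \<union> E'. inc'' e \<subseteq> V \<union> V'" using H1'' H2'' by blast
  moreover have "finite (E \<union> E')" using fin by blast
  moreover have "s \<in> V \<union> V'" "t' \<in> V \<union> V'" using sV t'V by blast+
  ultimately show ?case using ineq by blast
next
  case (parallel V E inc s t V' E' inc' inc'')
  note I1 = parallel.IH(1) and I2 = parallel.IH(2)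
  have fin: "finite E" "finite E'" using I1 I2 by blast+
  have sV: "s \<in> V" and tV: "t \<in> V" using I1 by blast+
  have H1: "\<forall>e\<in>E. inc e \<subseteq> V" and H2: "\<forall>e\<in>E'. inc' e \<subseteq> V'" using I1 I2 by blast+
  have H1'': "\<forall>e\<in>E. inc'' e \<subseteq> V" and H2'': "\<forall>e\<in>E'. inc'' e \<subseteq> V'" using H1 H2 parallel.hyps by auto
  have ag1: "\<forall>e\<in>A. inc'' e = inc e" if "A \<subseteq> E" for A using that parallel.hyps by auto
  have ag2: "\<forall>e\<in>A. inc'' e = inc' e" if "A \<subseteq> E'" for A using that parallel.hyps by auto
  have RS: "RR q inc'' (V \<union> V') (E \<union> E') = RR q inc V E * RR q inc' V' E' +
     RR q inc V E * SS q inc' V' E' s t + SS q inc V E s t * RR q inc' V' E'" for q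
  proof (rule ws_split3[OF fin parallel.hyps(3)])
    fix A1 A2 assume a: "A1 \<subseteq> E" "A2 \<subseteq> E'"
    have "conn inc'' (V \<union> V') (A1 \<union> A2) = ((conn inc'' V A1 \<and> conn inc'' V' A2) \<or>
       (conn inc'' V A1 \<and> two inc'' V' A2 s t) \<or> (two inc'' V A1 s t \<and> conn inc'' V' A2))"
    proof -
      have p1: "\<forall>e\<in>A1. inc'' e \<subseteq> V" using a(1) H1'' by blast
      have p2: "\<forall>e\<in>A2. inc'' e \<subseteq> V'" using a(2) H2'' by blast
      show ?thesis by (rule parallel_conn[OF p1 p2 parallel.hyps(4)])
    qed
    then show "conn inc'' (V \<union> V') (A1 \<union> A2) = ((conn inc V A1 \<and> conn inc' V' A2) \<or>
       (conn inc V A1 \<and> two inc' V' A2 s t) \<or> (two inc V A1 s t \<and> conn inc' V' A2))"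
      using conn_cong[OF ag1[OF a(1)], of V] conn_cong[OF ag2[OF a(2)], of V']
        two_cong[OF ag1[OF a(1)], of V] two_cong[OF ag2[OF a(2)], of V'] by (simp only:)
  next
    fix A1 show "\<not> (conn inc V A1 \<and> two inc V A1 s t)" by (rule conn_two_excl[OF sV tV])
  next
    have sV': "s \<in> V'" and tV': "t \<in> V'" using parallel.hyps(4) by auto
    show "\<not> (conn inc' V' A2 \<and> two inc' V' A2 s t)" for A2 by (rule conn_two_excl[OF sV' tV'])
  qed
  have SSe: "SS q inc'' (V \<union> V') (E \<union> E') s t = SS q inc V E s t * SS q inc' V' E' s t" for q
  proof (rule ws_split1[OF fin parallel.hyps(3)])
    fix A1 A2 assume a: "A1 \<subseteq> E" "A2 \<subseteq> E'"
    have "two inc'' (V \<union> V') (A1 \<union> A2) s t = (two inc'' V A1 s t \<and> two inc'' V' A2 s t)"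
    proof -
      have p1: "\<forall>e\<in>A1. inc'' e \<subseteq> V" using a(1) H1'' by blast
      have p2: "\<forall>e\<in>A2. inc'' e \<subseteq> V'" using a(2) H2'' by blast
      show ?thesis by (rule parallel_two[OF p1 p2 parallel.hyps(4)])
    qed
    then show "two inc'' (V \<union> V') (A1 \<union> A2) s t = (two inc V A1 s t \<and> two inc' V' A2 s t)"
      using two_cong[OF ag1[OF a(1)], of V] two_cong[OF ag2[OF a(2)], of V'] by (simp only:)
  qed
  have ineq: "cmod (RR q inc'' (V \<union> V') (E \<union> E') + SS q inc'' (V \<union> V') (E \<union> E') s t)
      < cmod (SS q inc'' (V \<union> V') (E \<union> E') s t)" if "1 < cmod q" for q
  proof -
    have i1: "cmod (RR q inc V E + SS q inc V E s t) < cmod (SS q inc V E s t)" using I1 that by blast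
    have i2: "cmod (RR q inc' V' E' + SS q inc' V' E' s t) < cmod (SS q inc' V' E' s t)" using I2 that by blast
    show ?thesis unfolding RS SSe using parallel_ineq[OF i1 i2] by simp
  qed
  have "\<forall>e\<in>E \<union> E'. inc'' e \<subseteq> V \<union> V'" using H1'' H2'' by blast
  moreover have "finite (E \<union> E')" using fin by blast
  moreover have "s \<in> V \<union> V'" "t \<in> V \<union> V'" using sV tV by blast+
  ultimately show ?case using ineq by blast
qed



lemma verts_Un: "verts inc (F1 \<union> F2) = verts inc F1 \<union> verts inc F2"
  unfolding verts_def by blast

lemma verts_mono: "F1 \<subseteq> F2 \<Longrightarrow> verts inc F1 \<subseteq> verts inc F2"
  unfolding verts_def by blast

lemma inc_verts: "\<forall>e\<in>F. inc e \<subseteq> verts inc F"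
  unfolding verts_def by blast

lemma finite_verts: "finite F \<Longrightarrow> (\<forall>e\<in>F. finite (inc e)) \<Longrightarrow> finite (verts inc F)"
  unfolding verts_def by blast

lemma mg_connected_conn: "mg_connected V A inc \<longleftrightarrow> V \<noteq> {} \<and> conn inc V A"
  unfolding mg_connected_def conn_def reach_def by simp

lemma reach_verts:
  assumes "reach inc A v u" "v \<noteq> u" shows "v \<in> verts inc A"
  using assms(1) unfolding reach_def
proof (cases rule: converse_rtranclpE)
  case base then show ?thesis using assms(2) by simp
next
  case (step y)
  then obtain e where "e \<in> A" "inc e = {v, y}" by blast
  then show ?thesis unfolding verts_def by blast
qed

lemma block_sub:
  assumes B: "is_block F1 inc B" and D: "F1 \<inter> F2 = {}"
    and C: "card (verts inc F1 \<inter> verts inc F2) \<le> 1" and Fi: "finite (verts inc F1 \<inter> verts inc F2)"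
  shows "is_block (F1 \<union> F2) inc B"
proof -
  have BF: "B \<subseteq> F1" and nB: "nonseparable inc B"
    and mx: "\<And>F'. B \<subseteq> F' \<Longrightarrow> F' \<subseteq> F1 \<Longrightarrow> nonseparable inc F' \<Longrightarrow> F' = B"
    using B unfolding is_block_def by blast+
  have Bne: "B \<noteq> {}" using nB unfolding nonseparable_def by blast
  have "F' = B" if a: "B \<subseteq> F'" "F' \<subseteq> F1 \<union> F2" "nonseparable inc F'" for F'
  proof (cases "F' \<inter> F2 = {}")
    case True
    then have "F' \<subseteq> F1" using a(2) by blast
    then show ?thesis using mx a by blast
  next
    case False
    have u: "(F' \<inter> F1) \<union> (F' \<inter> F2) = F'" using a(2) by blast
    have d: "(F' \<inter> F1) \<inter> (F' \<inter> F2) = {}" using D by blast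
    have n1: "F' \<inter> F1 \<noteq> {}" using Bne BF a(1) by blast
    have sub: "verts inc (F' \<inter> F1) \<inter> verts inc (F' \<inter> F2) \<subseteq> verts inc F1 \<inter> verts inc F2"
      using verts_mono[of "F' \<inter> F1" F1 inc] verts_mono[of "F' \<inter> F2" F2 inc] by blast
    have "card (verts inc (F' \<inter> F1) \<inter> verts inc (F' \<inter> F2)) \<le> 1"
      using card_mono[OF Fi sub] C by linarith
    then have "\<exists>G1 G2. G1 \<union> G2 = F' \<and> G1 \<inter> G2 = {} \<and> G1 \<noteq> {} \<and> G2 \<noteq> {} \<and>
            card (verts inc G1 \<inter> verts inc G2) \<le> 1"
      using u d n1 False by blast
    then show ?thesis using a(3) unfolding nonseparable_def by blast
  qed
  then show ?thesis unfolding is_block_def using BF nB by blast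
qed

lemma ws_empty: "ws q {} P = (if P {} then 1 else 0)"
  unfolding ws_def wt_def by simp

lemma main_lemma:
  assumes "finite F" "\<forall>e\<in>F. finite (inc e) \<and> inc e \<noteq> {}" "conn inc (verts inc F) F"
    "\<forall>B. is_block F inc B \<longrightarrow> (\<exists>s t. sp (verts inc B) B inc s t)" "1 < cmod q"
  shows "RR q inc (verts inc F) F \<noteq> 0"
  using assms(1-4)
proof (induction "card F" arbitrary: F rule: less_induct)
  case less
  note fin = less.prems(1) and fe = less.prems(2) and cF = less.prems(3) and bl = less.prems(4)
  show ?case
  proof (cases "nonseparable inc F")
    case True
    then have "is_block F inc F" unfolding is_block_def by blast
    then obtain s t where "sp (verts inc F) F inc s t" using bl by blast
    from sp_inv[OF this] assms(5)
    have "cmod (RR q inc (verts inc F) F + SS q inc (verts inc F) F s t) < cmod (SS q inc (verts inc F) F s t)"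
      by blast
    then show ?thesis by auto
  next
    case False
    show ?thesis
    proof (cases "F = {}")
      case True
      have "conn inc (verts inc {}) {}" unfolding conn_def verts_def by simp
      then show ?thesis using True by (simp add: ws_empty)
    next
      case Fne: False
      have "verts inc F \<noteq> {}" using Fne fe unfolding verts_def by blast
      then have "mg_connected (verts inc F) F inc" using cF mg_connected_conn by blast
      with False Fne obtain F1 F2 where sp: "F1 \<union> F2 = F" "F1 \<inter> F2 = {}" "F1 \<noteq> {}" "F2 \<noteq> {}"
        and cd: "card (verts inc F1 \<inter> verts inc F2) \<le> 1"
        unfolding nonseparable_def by blast
      have fin1: "finite F1" and fin2: "finite F2" using fin sp(1) by blast+
      have fe1: "\<forall>e\<in>F1. finite (inc e) \<and> inc e \<noteq> {}" and fe2: "\<forall>e\<in>F2. finite (inc e) \<and> inc e \<noteq> {}"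
        using fe sp(1) by blast+
      have fX: "finite (verts inc F1 \<inter> verts inc F2)"
        using finite_verts[of F1 inc] fin1 fe1 by blast
      have H1: "\<forall>e\<in>F1. inc e \<subseteq> verts inc F1" and H2: "\<forall>e\<in>F2. inc e \<subseteq> verts inc F2"
        by (rule inc_verts)+
      have vF: "verts inc F = verts inc F1 \<union> verts inc F2" using sp(1) verts_Un by metis
      have cF': "conn inc (verts inc F1 \<union> verts inc F2) (F1 \<union> F2)" using cF vF sp(1) by simp
      show ?thesis
      proof (cases "verts inc F1 \<inter> verts inc F2 = {}")
        case True
        obtain e1 where e1: "e1 \<in> F1" using sp(3) by blast
        obtain u where u: "u \<in> inc e1" using fe1 e1 by blast
        obtain e2 where e2: "e2 \<in> F2" using sp(4) by blast
        obtain v where v: "v \<in> inc e2" using fe2 e2 by blast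
        have uV: "u \<in> verts inc F1" using u e1 unfolding verts_def by blast
        have vV: "v \<in> verts inc F2" using v e2 unfolding verts_def by blast
        have "reach inc (F1 \<union> F2) u v" using cF' uV vV unfolding conn_def by blast
        from reach_Q[OF this uV H1 H2] True have "reach inc F1 u v" by blast
        from reach_closed[OF this uV H1] have "v \<in> verts inc F1" .
        then show ?thesis using True vV by blast
      next
        case False
        then obtain x where x: "x \<in> verts inc F1 \<inter> verts inc F2" by blast
        have X: "verts inc F1 \<inter> verts inc F2 = {x}"
          using x cd card_le_Suc0_iff_eq[OF fX] by auto
        have cc: "conn inc (verts inc F1) F1 \<and> conn inc (verts inc F2) F2"
          using series_conn[OF H1 H2 X] cF' by blast
        have prod0: "RR q inc (verts inc F1 \<union> verts inc F2) (F1 \<union> F2) = RR q inc (verts inc F1) F1 * RR q inc (verts inc F2) F2"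
        proof (rule ws_split1[OF fin1 fin2 sp(2)])
          fix A1 A2 assume a: "A1 \<subseteq> F1" "A2 \<subseteq> F2"
          have p1: "\<forall>e\<in>A1. inc e \<subseteq> verts inc F1" using a(1) H1 by blast
          have p2: "\<forall>e\<in>A2. inc e \<subseteq> verts inc F2" using a(2) H2 by blast
          show "conn inc (verts inc F1 \<union> verts inc F2) (A1 \<union> A2) =
              (conn inc (verts inc F1) A1 \<and> conn inc (verts inc F2) A2)"
            by (rule series_conn[OF p1 p2 X])
        qed
        have prod: "RR q inc (verts inc F) F = RR q inc (verts inc F1) F1 * RR q inc (verts inc F2) F2"
          using prod0 vF sp(1) by simp
        have c12: "card F = card F1 + card F2" using card_Un_disjoint[OF fin1 fin2 sp(2)] sp(1) by simp
        have lt1: "card F1 < card F" using c12 fin2 sp(4) by (simp add: card_gt_0_iff)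
        have lt2: "card F2 < card F" using c12 fin1 sp(3) by (simp add: card_gt_0_iff)
        have b1: "\<forall>B. is_block F1 inc B \<longrightarrow> (\<exists>s t. sp (verts inc B) B inc s t)"
        proof (intro allI impI)
          fix B assume "is_block F1 inc B"
          from block_sub[OF this sp(2) cd fX] sp(1) have "is_block F inc B" by simp
          then show "\<exists>s t. sp (verts inc B) B inc s t" using bl by blast
        qed
        have b2: "\<forall>B. is_block F2 inc B \<longrightarrow> (\<exists>s t. sp (verts inc B) B inc s t)"
        proof (intro allI impI)
          fix B assume "is_block F2 inc B"
          have d': "F2 \<inter> F1 = {}" using sp(2) by blast
          have cd': "card (verts inc F2 \<inter> verts inc F1) \<le> 1" using cd by (simp add: Int_commute)
          have fX': "finite (verts inc F2 \<inter> verts inc F1)" using fX by (simp add: Int_commute)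
          from block_sub[OF \<open>is_block F2 inc B\<close> d' cd' fX'] sp(1) have "is_block F inc B"
            by (simp add: Un_commute)
          then show "\<exists>s t. sp (verts inc B) B inc s t" using bl by blast
        qed
        have r1: "RR q inc (verts inc F1) F1 \<noteq> 0" using less.hyps[OF lt1 fin1 fe1 _ b1] cc by blast
        have r2: "RR q inc (verts inc F2) F2 \<noteq> 0" using less.hyps[OF lt2 fin2 fe2 _ b2] cc by blast
        show ?thesis using prod r1 r2 by simp
      qed
    qed
  qed
qed



lemma rel_eval:
  assumes "finite E" "V \<noteq> {}"
  shows "poly (reliability V E inc) q = RR q inc V E"
proof -
  have fp: "finite (Pow E)" using assms(1) by simp
  have "{A. A \<subseteq> E \<and> mg_connected V A inc} = {A \<in> Pow E. conn inc V A}"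
    using assms(2) by (auto simp: mg_connected_conn)
  then have "poly (reliability V E inc) q =
      (\<Sum>A\<in>{A \<in> Pow E. conn inc V A}. (1 - q) ^ card A * q ^ (card E - card A))"
    unfolding reliability_def by (simp add: poly_sum)
  also have "\<dots> = RR q inc V E"
    unfolding ws_def wt_def sum.inter_filter[OF fp] ..
  finally show ?thesis .
qed

theorem theorem0p2:
  fixes V :: "'v set" and E :: "'e set" and inc :: "'e \<Rightarrow> 'v set"
  assumes "SP' V E inc"
  shows "\<forall>q::complex. poly (reliability V E inc) q = 0 \<longrightarrow> cmod q \<le> 1"
proof (intro allI impI)
  fix q :: complex
  assume z: "poly (reliability V E inc) q = 0"
  show "cmod q \<le> 1"
  proof (rule ccontr)
    assume "\<not> cmod q \<le> 1"
    then have q: "1 < cmod q" by simp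
    have sp': "multigraph V E inc \<and> mg_connected V E inc \<and>
       (\<forall>B. is_block E inc B \<longrightarrow> (\<exists>s t. sp (verts inc B) B inc s t))"
      using assms unfolding SP'_def .
    note mg = conjunct1[OF sp'] and mc = conjunct1[OF conjunct2[OF sp']]
      and bl = conjunct2[OF conjunct2[OF sp']]
    have mg': "finite V \<and> finite E \<and> (\<forall>e\<in>E. inc e \<subseteq> V \<and> (card (inc e) = 1 \<or> card (inc e) = 2))"
      using mg unfolding multigraph_def .
    have finE: "finite E" using mg' by (elim conjE)
    have incV: "\<forall>e\<in>E. inc e \<subseteq> V" and cards: "\<forall>e\<in>E. card (inc e) = 1 \<or> card (inc e) = 2"
      using mg' by simp_all
    have Vne: "V \<noteq> {}" and cV: "conn inc V E" using mc unfolding mg_connected_conn by blast+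
    have fe: "\<forall>e\<in>E. finite (inc e) \<and> inc e \<noteq> {}"
    proof
      fix e assume "e \<in> E"
      then have "card (inc e) > 0" using cards by auto
      then show "finite (inc e) \<and> inc e \<noteq> {}" by (simp add: card_gt_0_iff)
    qed
    have ev: "poly (reliability V E inc) q = RR q inc V E" by (rule rel_eval[OF finE Vne])
    have "RR q inc V E \<noteq> 0"
    proof (cases "E = {}")
      case True
      then show ?thesis using cV by (simp add: ws_empty)
    next
      case False
      then obtain e where e: "e \<in> E" by blast
      then obtain u where u: "u \<in> inc e" using fe by blast
      have uE: "u \<in> verts inc E" using u e unfolding verts_def by blast
      have "V \<subseteq> verts inc E"
      proof
        fix v assume v: "v \<in> V"
        have uV: "u \<in> V" using incV e u by blast
        have "reach inc E v u" using cV v uV unfolding conn_def by blast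
        show "v \<in> verts inc E"
        proof (cases "v = u")
          case True then show ?thesis using uE by simp
        next
          case False then show ?thesis using reach_verts[OF \<open>reach inc E v u\<close>] by blast
        qed
      qed
      moreover have "verts inc E \<subseteq> V" using incV unfolding verts_def by blast
      ultimately have VE: "V = verts inc E" by blast
      have "conn inc (verts inc E) E" using cV VE by simp
      from main_lemma[OF finE fe this bl q] VE show ?thesis by simp
    qed
    then show False using z ev by simp
  qed
qed


end
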